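(* Let $q$ be an odd prime power with $q\neq 3,5$. Then $\mathrm{PSL}(2,q)\notin\mathfrak{Y}_n$.
   Context: $\mathfrak{Y}_n$ denotes the class of all groups $G$ such that $N_G(A)=A$ for every non-abelian subgroup $A\le G$. *)

theory Defs
  imports "HOL-Computational_Algebra.Primes" "HOL-Algebra.Group_Action"
begin

text \<open>2x2 matrices (a,b,c,d) = [[a,b],[c,d]] over a field.\<close>
type_synonym 'a mat2 = "'a \<times> 'a \<times> 'a \<times> 'a"

definition mat2_mult :: "'a::field mat2 \<Rightarrow> 'a mat2 \<Rightarrow> 'a mat2" where
  "mat2_mult X Y = (case X of (a,b,c,d) \<Rightarrow> case Y of (e,f,g,h) \<Rightarrow>
     (a*e + b*g, a*f + b*h, c*e + d*g, c*f + d*h))"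

definition SL2 :: "('a::field mat2) monoid" where
  "SL2 = \<lparr> carrier = {(a,b,c,d). a*d - b*c = 1},
          mult = mat2_mult,
          one = (1,0,0,1) \<rparr>"

definition SL2_centre :: "('a::field mat2) set" where
  "SL2_centre = {(1,0,0,1), (-1,0,0,-1)}"

definition PSL2 :: "('a::field mat2 set) monoid" where
  "PSL2 = SL2 Mod SL2_centre"

definition class_Yn :: "('g, 'b) monoid_scheme \<Rightarrow> bool" where
  "class_Yn G \<longleftrightarrow> (\<forall>A. subgroup A G \<and>
        \<not> (\<forall>x\<in>A. \<forall>y\<in>A. x \<otimes>\<^bsub>G\<^esub> y = y \<otimes>\<^bsub>G\<^esub> x)
        \<longrightarrow> normalizer G A = A)"

end

theory Submission
  imports Defs
begin


lemma not_Yn_quot: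
  fixes G (structure)
  assumes G: "group G" and N: "N \<lhd> G" and X: "subgroup X G" and NX: "N \<subseteq> X"
    and u: "u \<in> X" and v: "v \<in> X" and nc: "N #> (u \<otimes> v) \<noteq> N #> (v \<otimes> u)"
    and g: "g \<in> carrier G" "g \<notin> X"
    and cj: "(\<lambda>x. g \<otimes> x \<otimes> inv g) ` X = X"
  shows "\<not> class_Yn (G Mod N)"
proof -
  interpret G: group G by fact
  interpret N: normal N G by fact
  interpret Q: group "G Mod N" by (rule N.factorgroup_is_group)
  let ?p = "\<lambda>a. N #> a"
  have hom: "group_hom G (G Mod N) ?p"
    unfolding group_hom_def group_hom_axioms_def
    using N.r_coset_hom_Mod G.is_group Q.is_group by blast
  interpret h: group_hom G "G Mod N" ?p by (rule hom)
  have Xc: "X \<subseteq> carrier G" using X subgroup.subset by blast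
  define A where "A = ?p ` X"
  have sA: "subgroup A (G Mod N)" unfolding A_def by (rule h.subgroup_img_is_subgroup[OF X])
  have Ac: "A \<subseteq> carrier (G Mod N)" using sA subgroup.subset by blast
  have na: "\<not> (\<forall>x\<in>A. \<forall>y\<in>A. x \<otimes>\<^bsub>G Mod N\<^esub> y = y \<otimes>\<^bsub>G Mod N\<^esub> x)"
  proof
    assume H: "\<forall>x\<in>A. \<forall>y\<in>A. x \<otimes>\<^bsub>G Mod N\<^esub> y = y \<otimes>\<^bsub>G Mod N\<^esub> x"
    have "?p u \<otimes>\<^bsub>G Mod N\<^esub> ?p v = ?p v \<otimes>\<^bsub>G Mod N\<^esub> ?p u"
      using H u v unfolding A_def by blast
    then show False using nc u v Xc h.hom_mult by (metis subsetD)
  qed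
  have pgA: "?p g \<notin> A"
  proof
    assume "?p g \<in> A"
    then obtain x where x: "x \<in> X" "N #> g = N #> x" unfolding A_def by blast
    have "g \<in> N #> x" using G.rcos_self[OF g(1) N.subgroup_axioms] x by simp
    then obtain n where "n \<in> N" "g = n \<otimes> x" unfolding r_coset_def by blast
    then have "g \<in> X" using x(1) NX subgroup.m_closed[OF X] by auto
    with g show False by blast
  qed
  have pgN: "?p g \<in> normalizer (G Mod N) A"
  proof -
    have pgc: "?p g \<in> carrier (G Mod N)" using g by simp
    have ipg: "inv\<^bsub>G Mod N\<^esub> (?p g) = ?p (inv g)" using g by simp
    have "?p g <#\<^bsub>G Mod N\<^esub> A #>\<^bsub>G Mod N\<^esub> (inv\<^bsub>G Mod N\<^esub> (?p g)) = ?p ` ((\<lambda>x. g \<otimes> x \<otimes> inv g) ` X)"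
    proof -
      have e: "\<And>x. x \<in> X \<Longrightarrow> ?p g \<otimes>\<^bsub>G Mod N\<^esub> ?p x \<otimes>\<^bsub>G Mod N\<^esub> ?p (inv g) = ?p (g \<otimes> x \<otimes> inv g)"
        using g Xc by (simp add: h.hom_mult subsetD)
      have 1: "?p g <#\<^bsub>G Mod N\<^esub> A = (\<lambda>x. ?p g \<otimes>\<^bsub>G Mod N\<^esub> ?p x) ` X"
        unfolding l_coset_def A_def by blast
      have 2: "((\<lambda>x. ?p g \<otimes>\<^bsub>G Mod N\<^esub> ?p x) ` X) #>\<^bsub>G Mod N\<^esub> ?p (inv g)
           = (\<lambda>x. ?p g \<otimes>\<^bsub>G Mod N\<^esub> ?p x \<otimes>\<^bsub>G Mod N\<^esub> ?p (inv g)) ` X"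
        unfolding r_coset_def by blast
      show ?thesis unfolding ipg 1 2 image_comp comp_def using e by (intro image_cong) auto
    qed
    also have "\<dots> = A" using cj A_def by simp
    finally show ?thesis unfolding normalizer_def stabilizer_def using pgc Ac by simp
  qed
  show ?thesis unfolding class_Yn_def using sA na pgN pgA by blast
qed



lemma mat2_mult_simp: "mat2_mult (a,b,c,d) (e,f,g,h) = (a*e + b*g, a*f + b*h, c*e + d*g, c*f + d*h)"
  by (simp add: mat2_mult_def)

lemma SL2_carrier: "(a,b,c,d) \<in> carrier (SL2::'a::field mat2 monoid) \<longleftrightarrow> a*d - b*c = 1"
  by (simp add: SL2_def)

lemma SL2_mult: "x \<otimes>\<^bsub>(SL2::'a::field mat2 monoid)\<^esub> y = mat2_mult x y"
  by (simp add: SL2_def)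

lemma SL2_one: "\<one>\<^bsub>(SL2::'a::field mat2 monoid)\<^esub> = (1,0,0,1)"
  by (simp add: SL2_def)

lemma SL2_group: "group (SL2::'a::field mat2 monoid)"
proof (rule groupI)
  fix x y :: "'a mat2"
  assume xy: "x \<in> carrier SL2" "y \<in> carrier SL2"
  obtain a b c d where x: "x = (a,b,c,d)" by (cases x)
  obtain e f g h where y: "y = (e,f,g,h)" by (cases y)
  have "(a*e + b*g)*(c*f + d*h) - (a*f + b*h)*(c*e + d*g) = (a*d-b*c)*(e*h-f*g)" by algebra
  then show "x \<otimes>\<^bsub>SL2\<^esub> y \<in> carrier SL2"
    using xy by (simp add: x y SL2_def mat2_mult_simp)
next
  show "\<one>\<^bsub>SL2\<^esub> \<in> carrier (SL2::'a mat2 monoid)" by (simp add: SL2_def)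
next
  fix x y z :: "'a mat2"
  show "x \<otimes>\<^bsub>SL2\<^esub> y \<otimes>\<^bsub>SL2\<^esub> z = x \<otimes>\<^bsub>SL2\<^esub> (y \<otimes>\<^bsub>SL2\<^esub> z)"
    by (cases x; cases y; cases z) (simp add: SL2_def mat2_mult_simp algebra_simps)
next
  fix x :: "'a mat2"
  show "\<one>\<^bsub>SL2\<^esub> \<otimes>\<^bsub>SL2\<^esub> x = x" by (cases x) (simp add: SL2_def mat2_mult_simp)
next
  fix x :: "'a mat2"
  assume "x \<in> carrier SL2"
  then obtain a b c d where x: "x = (a,b,c,d)" "a*d - b*c = 1" by (cases x) (auto simp: SL2_def)
  show "\<exists>y\<in>carrier SL2. y \<otimes>\<^bsub>SL2\<^esub> x = \<one>\<^bsub>SL2\<^esub>"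
    by (rule bexI[of _ "(d,-b,-c,a)"]) (use x in \<open>auto simp: SL2_def mat2_mult_simp algebra_simps\<close>)
qed

lemma SL2_inv:
  assumes "a*d - b*c = (1::'a::field)"
  shows "inv\<^bsub>SL2\<^esub> (a,b,c,d) = (d,-b,-c,a)"
proof -
  interpret group "SL2::'a mat2 monoid" by (rule SL2_group)
  show ?thesis
    by (rule inv_equality) (use assms in \<open>auto simp: SL2_def mat2_mult_simp algebra_simps\<close>)
qed

definition neg2 :: "'a::field mat2 \<Rightarrow> 'a mat2" where
  "neg2 x = (case x of (a,b,c,d) \<Rightarrow> (-a,-b,-c,-d))"

lemma centre_coset: "SL2_centre #>\<^bsub>SL2\<^esub> (x::'a::field mat2) = {x, neg2 x}"
  by (cases x) (auto simp: r_coset_def SL2_centre_def SL2_def mat2_mult_simp neg2_def)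

lemma centre_normal: "SL2_centre \<lhd> (SL2::'a::field mat2 monoid)"
proof -
  interpret group "SL2::'a mat2 monoid" by (rule SL2_group)
  have sub: "subgroup SL2_centre (SL2::'a mat2 monoid)"
  proof (rule subgroupI)
    show "SL2_centre \<subseteq> carrier (SL2::'a mat2 monoid)" by (auto simp: SL2_centre_def SL2_def)
    show "SL2_centre \<noteq> {}" by (simp add: SL2_centre_def)
  next
    fix a :: "'a mat2" assume "a \<in> (SL2_centre::'a mat2 set)"
    then show "inv\<^bsub>SL2\<^esub> a \<in> SL2_centre"
      by (auto simp: SL2_centre_def SL2_inv)
  next
    fix a b :: "'a mat2" assume "a \<in> (SL2_centre::'a mat2 set)" "b \<in> SL2_centre"
    then show "a \<otimes>\<^bsub>SL2\<^esub> b \<in> SL2_centre"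
      by (auto simp: SL2_centre_def SL2_def mat2_mult_simp)
  qed
  show ?thesis
  proof (rule normalI[OF sub], intro ballI)
    fix x :: "'a mat2"
    show "SL2_centre #>\<^bsub>SL2\<^esub> x = x <#\<^bsub>SL2\<^esub> SL2_centre"
      by (cases x) (auto simp: r_coset_def l_coset_def SL2_centre_def SL2_def mat2_mult_simp)
  qed
qed

lemma SL2_subgroupI:
  assumes sub: "X \<subseteq> carrier (SL2::'a::field mat2 monoid)"
    and one: "(1,0,0,1) \<in> X"
    and mult: "\<And>x y. x \<in> X \<Longrightarrow> y \<in> X \<Longrightarrow> mat2_mult x y \<in> X"
    and inv: "\<And>a b c d. (a,b,c,d) \<in> X \<Longrightarrow> (d,-b,-c,a) \<in> X"
  shows "subgroup X SL2"
proof -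
  interpret group "SL2::'a mat2 monoid" by (rule SL2_group)
  show ?thesis
  proof (rule subgroupI)
    show "X \<noteq> {}" using one by blast
  next
    fix x assume x: "x \<in> X"
    obtain a b c d where xe: "x = (a,b,c,d)" by (cases x)
    have "a*d - b*c = 1" using sub x xe by (auto simp: SL2_def)
    then show "inv\<^bsub>SL2\<^esub> x \<in> X" using xe inv x by (simp add: SL2_inv)
  qed (use sub mult in \<open>auto simp: SL2_mult\<close>)
qed

lemma not_Yn_SL2:
  assumes X: "subgroup X (SL2::'a::field mat2 monoid)" and NX: "(-1,0,0,-1) \<in> X"
    and u: "u \<in> X" and v: "v \<in> X"
    and nc1: "mat2_mult u v \<noteq> mat2_mult v u" and nc2: "mat2_mult u v \<noteq> neg2 (mat2_mult v u)"
    and g: "g \<in> carrier SL2" "g \<notin> X"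
    and cj: "(\<lambda>x. g \<otimes>\<^bsub>SL2\<^esub> x \<otimes>\<^bsub>SL2\<^esub> inv\<^bsub>SL2\<^esub> g) ` X = X"
  shows "\<not> class_Yn (PSL2::'a mat2 set monoid)"
proof -
  have "\<one>\<^bsub>SL2\<^esub> \<in> X" using X subgroup.one_closed by blast
  then have N: "SL2_centre \<subseteq> X" using NX by (auto simp: SL2_centre_def SL2_one)
  have "SL2_centre #>\<^bsub>SL2\<^esub> (u \<otimes>\<^bsub>SL2\<^esub> v) \<noteq> SL2_centre #>\<^bsub>SL2\<^esub> (v \<otimes>\<^bsub>SL2\<^esub> u)"
  proof
    assume "SL2_centre #>\<^bsub>SL2\<^esub> (u \<otimes>\<^bsub>SL2\<^esub> v) = SL2_centre #>\<^bsub>SL2\<^esub> (v \<otimes>\<^bsub>SL2\<^esub> u)"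
    then have "mat2_mult u v \<in> {mat2_mult v u, neg2 (mat2_mult v u)}"
      unfolding centre_coset SL2_mult by blast
    with nc1 nc2 show False by blast
  qed
  then show ?thesis unfolding PSL2_def
    by (rule not_Yn_quot[OF SL2_group centre_normal X N u v _ g cj])
qed



definition Rm :: "'a::field \<Rightarrow> 'a \<Rightarrow> 'a mat2" where "Rm u v = (u,-v,v,u)"
definition Fm :: "'a::field \<Rightarrow> 'a \<Rightarrow> 'a \<Rightarrow> 'a \<Rightarrow> 'a mat2" where
  "Fm a b u v = (a*u + b*v, -a*v + b*u, b*u - a*v, -b*v - a*u)"
definition isP :: "'a::field \<Rightarrow> 'a \<Rightarrow> bool" where
  "isP u v \<longleftrightarrow> (\<exists>x y. x*x+y*y=1 \<and> u = x*x-y*y \<and> v = 2*x*y)"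

lemma M1: "mat2_mult (Rm u v) (Rm u' v') = Rm (u*u'-v*v') (u*v'+v*u')"
  by (simp add: Rm_def mat2_mult_simp algebra_simps)
lemma M2: "mat2_mult (Rm u v) (Fm a b u' v') = Fm a b (u*u'+v*v') (u*v'-v*u')"
  by (simp add: Rm_def Fm_def mat2_mult_simp algebra_simps)
lemma M3: "mat2_mult (Fm a b u v) (Rm u' v') = Fm a b (u*u'-v*v') (u*v'+v*u')"
  by (simp add: Rm_def Fm_def mat2_mult_simp algebra_simps)
lemma M4: assumes "a*a+b*b = (-1::'a::field)"
  shows "mat2_mult (Fm a b u v) (Fm a b u' v') = Rm (-(u*u'+v*v')) (-(u*v'-v*u'))"
proof -
  have bb: "b*b = -1 - a*a" using assms by (simp add: algebra_simps)
  show ?thesis unfolding Rm_def Fm_def mat2_mult_simp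
    by (simp add: algebra_simps; intro conjI; simp add: mult.assoc[symmetric] bb; algebra)
qed

lemma isP_mult: "isP u v \<Longrightarrow> isP u' v' \<Longrightarrow> isP (u*u'-v*v') (u*v'+v*u')"
  unfolding isP_def
proof (elim exE conjE)
  fix x y x' y' :: 'a
  assume h: "x*x+y*y=1" "u = x*x-y*y" "v = 2*x*y" "x'*x'+y'*y'=1" "u' = x'*x'-y'*y'" "v' = 2*x'*y'"
  show "\<exists>X Y. X*X+Y*Y=1 \<and> u*u'-v*v' = X*X-Y*Y \<and> u*v'+v*u' = 2*X*Y"
  proof (intro exI conjI)
    have "(x*x'-y*y')*(x*x'-y*y')+(x*y'+y*x')*(x*y'+y*x') = (x*x+y*y)*(x'*x'+y'*y')" by algebra
    then show "(x*x'-y*y')*(x*x'-y*y')+(x*y'+y*x')*(x*y'+y*x') = 1" using h by simp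
    show "u*u'-v*v' = (x*x'-y*y')*(x*x'-y*y') - (x*y'+y*x')*(x*y'+y*x')" using h by algebra
    show "u*v'+v*u' = 2*(x*x'-y*y')*(x*y'+y*x')" using h by algebra
  qed
qed

lemma isP_conj: "isP u v \<Longrightarrow> isP u (-v)"
  unfolding isP_def by (elim exE conjE, rule_tac x=x in exI, rule_tac x="-y" in exI) auto

lemma isP_neg: "isP u v \<Longrightarrow> isP (-u) (-v)"
  unfolding isP_def by (elim exE conjE, rule_tac x="-y" in exI, rule_tac x="x" in exI) (auto simp: algebra_simps)

lemma isP_one: "isP 1 0" unfolding isP_def by (rule exI[of _ 1], rule exI[of _ 0]) simp
lemma isP_mone: "isP (-1) 0" unfolding isP_def by (rule exI[of _ 0], rule exI[of _ 1]) simp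

lemma isP_norm: "isP u v \<Longrightarrow> u*u+v*v = 1"
  unfolding isP_def
proof (elim exE conjE)
  fix x y :: 'a assume h: "x*x+y*y=1" "u = x*x-y*y" "v = 2*x*y"
  have "u*u+v*v = (x*x+y*y)*(x*x+y*y)" using h by algebra
  then show ?thesis using h by simp
qed

lemma isP_sq: "x*x+y*y = 1 \<Longrightarrow> isP (x*x-y*y) (2*x*y)"
  unfolding isP_def by blast



lemma conjR: "c*c+d*d = (1::'a::field) \<Longrightarrow> mat2_mult (mat2_mult (Rm c d) (Rm u v)) (Rm c (-d)) = Rm u v"
  unfolding M1 by (simp add: Rm_def; intro conjI; algebra)

lemma conjF: "mat2_mult (mat2_mult (Rm c d) (Fm a b u v)) (Rm c (-d)) =
   Fm a b ((c*c-d*d)*u + 2*c*d*v) ((c*c-d*d)*v - 2*c*d*u)"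
  unfolding M2 M3 by (simp add: Fm_def; intro conjI; algebra)

lemma conjF': "c*c+d*d = (1::'a::field) \<Longrightarrow>
   mat2_mult (mat2_mult (Rm c d) (Fm a b ((c*c-d*d)*u - 2*c*d*v) ((c*c-d*d)*v + 2*c*d*u))) (Rm c (-d)) = Fm a b u v"
  unfolding conjF by (simp add: Fm_def; intro conjI; algebra)

lemma Fm_inj: assumes "a*a+b*b = (-1::'a::field)" "Fm a b u v = Fm a b u' v'"
  shows "u = u' \<and> v = v'"
proof -
  have e: "a*u + b*v = a*u' + b*v'" "b*u - a*v = b*u' - a*v'" using assms(2) by (auto simp: Fm_def)
  have "u = -(a*(a*u + b*v) + b*(b*u - a*v))" using assms(1) by algebra
  also have "\<dots> = u'" unfolding e using assms(1) by algebra
  finally have 1: "u = u'" .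
  have "v = -(b*(a*u + b*v) - a*(b*u - a*v))" using assms(1) by algebra
  also have "\<dots> = v'" unfolding e using assms(1) by algebra
  finally show ?thesis using 1 by simp
qed

lemma exists_not_P:
  fixes dummy :: "'a::{field,finite}"
  assumes two: "(2::'a) \<noteq> 0"
  shows "\<exists>c d::'a. c*c+d*d = 1 \<and> \<not> isP c d"
proof -
  define T where "T = {(x,y). x*x+y*y = (1::'a)}"
  define sq where "sq = (\<lambda>(x::'a,y::'a). (x*x-y*y, 2*x*y))"
  have sub: "sq ` T \<subseteq> T"
  proof
    fix p assume "p \<in> sq ` T"
    then obtain x y where "x*x+y*y=1" "p = (x*x-y*y, 2*x*y)" by (auto simp: T_def sq_def)
    then show "p \<in> T" using isP_norm[OF isP_sq] by (auto simp: T_def)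
  qed
  have "(1,0) \<in> T" "(-1,0) \<in> T" by (auto simp: T_def)
  moreover have "sq (1,0) = sq (-1,0)" by (simp add: sq_def)
  moreover have "(1::'a,0::'a) \<noteq> (-1,0)"
  proof
    assume "(1::'a,0::'a) = (-1,0)"
    then have e: "(1::'a) = -1" by simp
    have "(2::'a) = 1 + 1" by simp
    also have "\<dots> = 1 + -1" using e by (metis e)
    also have "\<dots> = 0" by simp
    finally have "(2::'a) = 0" .
    with two show False by simp
  qed
  ultimately have ni: "\<not> inj_on sq T" unfolding inj_on_def by blast
  have fin: "finite T" by simp
  have "card (sq ` T) \<noteq> card T" using ni inj_on_iff_eq_card[OF fin, of sq] by blast
  then have "card (sq ` T) < card T" using card_image_le[OF fin, of sq] by linarith
  then have "\<not> T \<subseteq> sq ` T" using card_mono[of "sq ` T" T] fin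
    by (metis finite_imageI card_mono not_le)
  then obtain c d where cd: "(c,d) \<in> T" "(c,d) \<notin> sq ` T" by auto
  have "\<not> isP c d"
  proof
    assume "isP c d"
    then obtain x y where "x*x+y*y=1" "c = x*x-y*y" "d = 2*x*y" unfolding isP_def by blast
    then have "(c,d) \<in> sq ` T" unfolding T_def sq_def by (auto intro!: image_eqI[of _ _ "(x,y)"])
    with cd show False by blast
  qed
  with cd show ?thesis unfolding T_def by blast
qed



lemma Rm_det: "Rm u v \<in> carrier (SL2::'a::field mat2 monoid) \<longleftrightarrow> u*u+v*v = 1"
  by (simp add: Rm_def SL2_def)

lemma Fm_det: "a*a+b*b = (-1::'a::field) \<Longrightarrow> Fm a b u v \<in> carrier (SL2::'a mat2 monoid) \<longleftrightarrow> u*u+v*v = 1"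
  unfolding Fm_def SL2_carrier
proof -
  assume ab: "a*a+b*b = -1"
  have "(a*u + b*v)*(-b*v - a*u) - (-a*v + b*u)*(b*u - a*v) = -(a*a+b*b)*(u*u+v*v)" by algebra
  then show "((a*u + b*v)*(-b*v - a*u) - (-a*v + b*u)*(b*u - a*v) = 1) = (u*u+v*v = 1)"
    using ab by simp
qed

lemma rot_case:
  fixes a b x0 y0 :: "'a::{field,finite}"
  assumes two: "(2::'a) \<noteq> 0" and ab: "a*a+b*b = -1"
    and p0: "x0*x0+y0*y0 = 1" "x0*y0 \<noteq> 0" "x0*x0 \<noteq> y0*y0"
  shows "\<not> class_Yn (PSL2::'a mat2 set monoid)"
proof -
  define X where "X = {Rm u v | u v. isP u v} \<union> {Fm a b u v | u v. isP u v}"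
  obtain c d :: 'a where cd: "c*c+d*d = 1" "\<not> isP c d" using exists_not_P[OF two] by blast
  have Xsub: "X \<subseteq> carrier SL2"
    using isP_norm by (auto simp: X_def Rm_det Fm_det[OF ab])
  have mult: "mat2_mult x y \<in> X" if "x \<in> X" "y \<in> X" for x y
  proof -
    from that obtain u v u' v' where P: "isP u v" "isP u' v'" and
      c: "(x = Rm u v \<or> x = Fm a b u v) \<and> (y = Rm u' v' \<or> y = Fm a b u' v')"
      unfolding X_def by blast
    have 1: "isP (u*u'-v*v') (u*v'+v*u')" using isP_mult[OF P] .
    have 2: "isP (u*u'+v*v') (u*v'-v*u')" using isP_mult[OF isP_conj[OF P(1)] P(2)] by simp
    have 3: "isP (-(u*u'+v*v')) (-(u*v'-v*u'))" using isP_neg[OF 2] .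
    show ?thesis using c 1 2 3 unfolding X_def
      by (elim conjE disjE) (simp_all only: M1 M2 M3 M4[OF ab], blast+)
  qed
  have inv: "(dd,-bb,-cc,aa) \<in> X" if "(aa,bb,cc,dd) \<in> X" for aa bb cc dd
  proof -
    from that obtain u v where P: "isP u v" and c: "(aa,bb,cc,dd) = Rm u v \<or> (aa,bb,cc,dd) = Fm a b u v"
      unfolding X_def by blast
    from c show ?thesis
    proof
      assume "(aa,bb,cc,dd) = Rm u v"
      then have "(dd,-bb,-cc,aa) = Rm u (-v)" by (simp add: Rm_def)
      then show ?thesis using isP_conj[OF P] unfolding X_def by blast
    next
      assume "(aa,bb,cc,dd) = Fm a b u v"
      then have "(dd,-bb,-cc,aa) = Fm a b (-u) (-v)" by (simp add: Fm_def)
      then show ?thesis using isP_neg[OF P] unfolding X_def by blast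
    qed
  qed
  have one: "(1,0,0,1) \<in> X"
  proof -
    have "(1,0,0,1) = Rm (1::'a) 0" by (simp add: Rm_def)
    then show ?thesis using isP_one unfolding X_def by blast
  qed
  have sX: "subgroup X SL2" by (rule SL2_subgroupI[OF Xsub one mult inv])
  have mI: "(-1,0,0,-1) \<in> X"
  proof -
    have "(-1,0,0,-1) = Rm (-1::'a) 0" by (simp add: Rm_def)
    then show ?thesis using isP_mone unfolding X_def by blast
  qed
  define u0 where "u0 = Rm (x0*x0-y0*y0) (2*x0*y0)"
  define v0 where "v0 = Fm a b 1 0"
  have u0: "u0 \<in> X" unfolding u0_def X_def using isP_sq[OF p0(1)] by blast
  have v0: "v0 \<in> X" unfolding v0_def X_def using isP_one by blast
  have e1: "mat2_mult u0 v0 = Fm a b (x0*x0-y0*y0) (-(2*x0*y0))"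
    unfolding u0_def v0_def M2 by simp
  have e2: "mat2_mult v0 u0 = Fm a b (x0*x0-y0*y0) (2*x0*y0)"
    unfolding u0_def v0_def M3 by simp
  have nz1: "2*x0*y0 \<noteq> 0" using two p0(2) by (simp add: mult.assoc)
  have nz2: "x0*x0-y0*y0 \<noteq> 0" using p0(3) by simp
  have nc1: "mat2_mult u0 v0 \<noteq> mat2_mult v0 u0"
  proof
    assume "mat2_mult u0 v0 = mat2_mult v0 u0"
    then have "-(2*x0*y0) = 2*x0*y0" using Fm_inj[OF ab] unfolding e1 e2 by blast
    then have "2*(2*x0*y0) = 0" by (simp add: algebra_simps)
    with two nz1 show False by (simp only: mult_eq_0_iff) blast
  qed
  have nc2: "mat2_mult u0 v0 \<noteq> neg2 (mat2_mult v0 u0)"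
  proof
    assume "mat2_mult u0 v0 = neg2 (mat2_mult v0 u0)"
    then have "Fm a b (x0*x0-y0*y0) (-(2*x0*y0)) = Fm a b (-(x0*x0-y0*y0)) (-(2*x0*y0))"
      unfolding e1 e2 by (simp add: Fm_def neg2_def algebra_simps)
    then have "(x0*x0-y0*y0) = -(x0*x0-y0*y0)" using Fm_inj[OF ab] by blast
    then have "2*(x0*x0-y0*y0) = 0" by (simp add: algebra_simps)
    with two nz2 show False by (simp only: mult_eq_0_iff) blast
  qed
  define g where "g = Rm c d"
  have gc: "g \<in> carrier SL2" unfolding g_def Rm_det using cd(1) .
  have gX: "g \<notin> X"
  proof
    assume "g \<in> X"
    then obtain u v where "isP u v" "g = Rm u v \<or> g = Fm a b u v" unfolding X_def by blast
    then consider "isP u v" "g = Rm u v" | "g = Fm a b u v" by blast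
    then show False
    proof cases
      case 1
      then have "c = u" "d = v" by (auto simp: g_def Rm_def)
      with 1 cd show False by simp
    next
      case 2
      then have h: "c = a*u + b*v" "c = -b*v - a*u" "-d = -a*v + b*u" "d = b*u - a*v"
        by (auto simp: g_def Rm_def Fm_def)
      have "2*c = 0" using h(1,2) by algebra
      then have "c = 0" using two by simp
      have "2*d = 0" using h(3,4) by algebra
      then have "d = 0" using two by simp
      with \<open>c = 0\<close> cd(1) show False by simp
    qed
  qed
  have ig: "inv\<^bsub>SL2\<^esub> g = Rm c (-d)"
    unfolding g_def Rm_def using cd(1) by (simp add: SL2_inv)
  have cjx: "g \<otimes>\<^bsub>SL2\<^esub> x \<otimes>\<^bsub>SL2\<^esub> inv\<^bsub>SL2\<^esub> g = mat2_mult (mat2_mult (Rm c d) x) (Rm c (-d))" for x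
    using ig unfolding SL2_mult g_def by simp
  have cj: "(\<lambda>x. g \<otimes>\<^bsub>SL2\<^esub> x \<otimes>\<^bsub>SL2\<^esub> inv\<^bsub>SL2\<^esub> g) ` X = X"
  proof (intro equalityI subsetI)
    fix y assume "y \<in> (\<lambda>x. g \<otimes>\<^bsub>SL2\<^esub> x \<otimes>\<^bsub>SL2\<^esub> inv\<^bsub>SL2\<^esub> g) ` X"
    then obtain x where x: "x \<in> X" "y = mat2_mult (mat2_mult (Rm c d) x) (Rm c (-d))"
      unfolding cjx by blast
    then obtain u v where P: "isP u v" "x = Rm u v \<or> x = Fm a b u v" unfolding X_def by blast
    from P(2) show "y \<in> X"
    proof
      assume "x = Rm u v"
      then have "y = Rm u v" using x(2) conjR[OF cd(1)] by simp
      then show ?thesis using P(1) unfolding X_def by blast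
    next
      assume "x = Fm a b u v"
      then have y: "y = Fm a b ((c*c-d*d)*u + 2*c*d*v) ((c*c-d*d)*v - 2*c*d*u)"
        using x(2) conjF by simp
      have "isP ((c*c-d*d)*u + 2*c*d*v) ((c*c-d*d)*v - 2*c*d*u)"
        using isP_mult[OF isP_sq[of c "-d"] P(1)] cd(1) by (simp add: algebra_simps)
      then show ?thesis using y unfolding X_def by blast
    qed
  next
    fix y assume "y \<in> X"
    then obtain u v where P: "isP u v" "y = Rm u v \<or> y = Fm a b u v" unfolding X_def by blast
    have "\<exists>x\<in>X. y = mat2_mult (mat2_mult (Rm c d) x) (Rm c (-d))"
      using P(2)
    proof
      assume "y = Rm u v"
      then show ?thesis using conjR[OF cd(1), of u v] \<open>y \<in> X\<close> by (intro bexI[of _ y]) auto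
    next
      assume y: "y = Fm a b u v"
      have P': "isP ((c*c-d*d)*u - 2*c*d*v) ((c*c-d*d)*v + 2*c*d*u)"
        using isP_mult[OF isP_sq[of c d] P(1)] cd(1) by (simp add: algebra_simps)
      have "Fm a b ((c*c-d*d)*u - 2*c*d*v) ((c*c-d*d)*v + 2*c*d*u) \<in> X"
        using P' unfolding X_def by blast
      then show ?thesis using conjF'[OF cd(1)] y by (intro bexI) auto
    qed
    then show "y \<in> (\<lambda>x. g \<otimes>\<^bsub>SL2\<^esub> x \<otimes>\<^bsub>SL2\<^esub> inv\<^bsub>SL2\<^esub> g) ` X"
      by (simp add: image_iff cjx)
  qed
  show ?thesis by (rule not_Yn_SL2[OF sX mI u0 v0 nc1 nc2 gc gX cj])
qed



lemma card_char: "of_nat (card (UNIV::'a::{ring_1,finite} set)) = (0::'a)"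
proof -
  have bij: "bij_betw (\<lambda>y::'a. y + 1) UNIV UNIV"
    by (rule bij_betwI[of _ _ _ "\<lambda>y. y - 1"]) auto
  have "(\<Sum>y\<in>UNIV. y + 1) = (\<Sum>y\<in>(UNIV::'a set). y)"
    using sum.reindex_bij_betw[OF bij, of "\<lambda>y. y"] by simp
  then have "(\<Sum>y\<in>(UNIV::'a set). y) + of_nat (card (UNIV::'a set)) = (\<Sum>y\<in>(UNIV::'a set). y)"
    by (simp add: sum.distrib)
  then show ?thesis by simp
qed

lemma sq_card: "card {t::'a::field. (t+c)*(t+c) = e} \<le> 2"
proof (cases "{t::'a. (t+c)*(t+c) = e} = {}")
  case True then show ?thesis by simp
next
  case False
  then obtain t0 where t0: "(t0+c)*(t0+c) = e" by auto
  have "{t::'a. (t+c)*(t+c) = e} \<subseteq> {t0, -t0-2*c}"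
  proof
    fix t assume "t \<in> {t::'a. (t+c)*(t+c) = e}"
    then have "(t+c)*(t+c) = (t0+c)*(t0+c)" using t0 by simp
    then have "(t - t0)*(t + t0 + 2*c) = 0" by algebra
    then have "t - t0 = 0 \<or> t + t0 + 2*c = 0" by simp
    moreover have "t + t0 + 2*c = 0 \<Longrightarrow> t = -t0-2*c" by algebra
    ultimately have "t = t0 \<or> t = -t0-2*c" by auto
    then show "t \<in> {t0, -t0-2*c}" by simp
  qed
  then have "card {t::'a. (t+c)*(t+c) = e} \<le> card {t0, -t0-2*c}" by (rule card_mono[rotated]) simp
  also have "\<dots> \<le> 2" by (simp add: card_insert_if)
  finally show ?thesis .
qed

lemma sum_two_squares:
  assumes odd: "odd (card (UNIV::'a::{field,finite} set))"
  shows "\<exists>a b::'a. a*a+b*b = -1"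
proof (rule ccontr)
  assume na: "\<not> ?thesis"
  define Q where "Q = (\<lambda>a::'a. a*a) ` UNIV"
  define Q2 where "Q2 = (\<lambda>s::'a. -1 - s) ` Q"
  have fQ: "finite Q" by simp
  have U: "(UNIV::'a set) = (\<Union>s\<in>Q. {a. (a+0)*(a+0) = s})" unfolding Q_def by auto
  have "card (UNIV::'a set) \<le> (\<Sum>s\<in>Q. card {a::'a. (a+0)*(a+0) = s})"
    by (subst U) (rule card_UN_le[OF fQ])
  also have "\<dots> \<le> (\<Sum>s\<in>Q. 2)" by (rule sum_mono) (rule sq_card)
  also have "\<dots> = 2 * card Q" by simp
  finally have c1: "card (UNIV::'a set) \<le> 2 * card Q" .
  have "inj_on (\<lambda>s::'a. -1 - s) Q" by (auto simp: inj_on_def)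
  then have c2: "card Q2 = card Q" unfolding Q2_def by (rule card_image)
  have disj: "Q \<inter> Q2 = {}"
  proof (rule ccontr)
    assume "Q \<inter> Q2 \<noteq> {}"
    then have "\<exists>a b::'a. a*a = -1 - b*b" unfolding Q_def Q2_def by auto
    then obtain a b :: 'a where "a*a = -1 - b*b" by blast
    then have "a*a+b*b = -1" by (simp add: algebra_simps)
    with na show False by blast
  qed
  have "card Q + card Q2 = card (Q \<union> Q2)" using disj by (simp add: card_Un_disjoint Q2_def)
  also have "\<dots> \<le> card (UNIV::'a set)" by (rule card_mono) auto
  finally have "2 * card Q \<le> card (UNIV::'a set)" using c2 by simp
  with c1 have "card (UNIV::'a set) = 2 * card Q" by simp
  with odd show False by simp
qed



lemma two_nz:
  assumes "odd (card (UNIV::'a::{field,finite} set))"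
  shows "(2::'a) \<noteq> 0"
proof
  assume two: "(2::'a) = 0"
  obtain k where k: "card (UNIV::'a set) = 2*k+1" using assms oddE by blast
  have "(0::'a) = of_nat (2*k+1)" using card_char[where 'a='a] k by simp
  also have "\<dots> = 2 * of_nat k + 1" by simp
  also have "\<dots> = 1" using two by simp
  finally show False by simp
qed

lemma good_point:
  assumes two: "(2::'a::{field,finite}) \<noteq> 0" and big: "card (UNIV::'a set) \<ge> 10"
  shows "\<exists>x0 y0::'a. x0*x0+y0*y0 = 1 \<and> x0*y0 \<noteq> 0 \<and> x0*x0 \<noteq> y0*y0"
proof -
  define B where "B = {0::'a} \<union> {t. (t+0)*(t+0) = -1} \<union> {t. (t+0)*(t+0) = 1}
      \<union> {t. (t+1)*(t+1) = 2} \<union> {t. (t+ -1)*(t+ -1) = 2}"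
  have "card B \<le> 1 + 2 + 2 + 2 + 2"
    unfolding B_def
    by (rule order_trans[OF card_Un_le] add_mono sq_card order_trans[OF card_Un_le])+ (rule sq_card | simp)+
  then have "card B < card (UNIV::'a set)" using big by simp
  then have "B \<noteq> UNIV" by auto
  then obtain t where t: "t \<notin> B" by auto
  have t0: "t \<noteq> 0" and D: "1 + t*t \<noteq> 0" and t1: "1 - t*t \<noteq> 0"
    and t2: "(t+1)*(t+1) \<noteq> 2" and t3: "(t - 1)*(t - 1) \<noteq> 2"
    using t unfolding B_def by (auto simp: eq_neg_iff_add_eq_0 add.commute)
  define x0 where "x0 = (1-t*t)/(1+t*t)"
  define y0 where "y0 = 2*t/(1+t*t)"
  have "x0*x0+y0*y0 = ((1-t*t)*(1-t*t) + (2*t)*(2*t))/((1+t*t)*(1+t*t))"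
    unfolding x0_def y0_def by (simp add: add_divide_distrib)
  also have "(1-t*t)*(1-t*t) + (2*t)*(2*t) = (1+t*t)*(1+t*t)" by algebra
  finally have 1: "x0*x0+y0*y0 = 1" using D by simp
  have 2: "x0*y0 \<noteq> 0" unfolding x0_def y0_def using D t0 t1 two by simp
  have 3: "x0*x0 \<noteq> y0*y0"
  proof
    assume "x0*x0 = y0*y0"
    then have "(1-t*t)*(1-t*t)/((1+t*t)*(1+t*t)) = (2*t)*(2*t)/((1+t*t)*(1+t*t))"
      unfolding x0_def y0_def by simp
    then have "(1-t*t)*(1-t*t) = (2*t)*(2*t)" using D by (simp add: divide_cancel_right)
    then have "((t+1)*(t+1) - 2)*((t - 1)*(t - 1) - 2) = 0" by algebra
    with t2 t3 show False by simp
  qed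
  show ?thesis using 1 2 3 by blast
qed

lemma big_case:
  assumes "odd (card (UNIV::'a::{field,finite} set))" "card (UNIV::'a set) \<ge> 10"
  shows "\<not> class_Yn (PSL2::'a mat2 set monoid)"
proof -
  have two: "(2::'a) \<noteq> 0" by (rule two_nz[OF assms(1)])
  obtain a b :: 'a where ab: "a*a+b*b = -1" using sum_two_squares[OF assms(1)] by blast
  obtain x0 y0 :: 'a where p: "x0*x0+y0*y0 = 1" "x0*y0 \<noteq> 0" "x0*x0 \<noteq> y0*y0"
    using good_point[OF two assms(2)] by blast
  show ?thesis by (rule rot_case[OF two ab p])
qed



definition qmul :: "'a::comm_ring \<times> 'a \<times> 'a \<times> 'a \<Rightarrow> 'a \<times> 'a \<times> 'a \<times> 'a \<Rightarrow> 'a \<times> 'a \<times> 'a \<times> 'a" where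
  "qmul p p' = (case p of (w1,x1,y1,z1) \<Rightarrow> case p' of (w2,x2,y2,z2) \<Rightarrow>
     (w1*w2 - x1*x2 - y1*y2 - z1*z2, w1*x2 + x1*w2 + y1*z2 - z1*y2,
      w1*y2 - x1*z2 + y1*w2 + z1*x2, w1*z2 + x1*y2 - y1*x2 + z1*w2))"

definition H2l :: "(int \<times> int \<times> int \<times> int) list" where
  "H2l = [(2,0,0,0),(-2,0,0,0),(0,2,0,0),(0,-2,0,0),(0,0,2,0),(0,0,-2,0),(0,0,0,2),(0,0,0,-2),
    (1,1,1,1),(1,1,1,-1),(1,1,-1,1),(1,1,-1,-1),(1,-1,1,1),(1,-1,1,-1),(1,-1,-1,1),(1,-1,-1,-1),
    (-1,1,1,1),(-1,1,1,-1),(-1,1,-1,1),(-1,1,-1,-1),(-1,-1,1,1),(-1,-1,1,-1),(-1,-1,-1,1),(-1,-1,-1,-1)]"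

definition half4 :: "int \<times> int \<times> int \<times> int \<Rightarrow> int \<times> int \<times> int \<times> int" where
  "half4 p = (case p of (w,x,y,z) \<Rightarrow> (w div 2, x div 2, y div 2, z div 2))"
definition dbl4 :: "int \<times> int \<times> int \<times> int \<Rightarrow> int \<times> int \<times> int \<times> int" where
  "dbl4 p = (case p of (w,x,y,z) \<Rightarrow> (2*w, 2*x, 2*y, 2*z))"
definition conj4 :: "int \<times> int \<times> int \<times> int \<Rightarrow> int \<times> int \<times> int \<times> int" where
  "conj4 p = (case p of (w,x,y,z) \<Rightarrow> (w, -x, -y, -z))"

lemma I1: "list_all (\<lambda>h. list_all (\<lambda>h'. half4 (qmul h h') \<in> set H2l \<and> dbl4 (half4 (qmul h h')) = qmul h h') H2l) H2l"
  by code_simp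
lemma I2: "list_all (\<lambda>h. conj4 h \<in> set H2l) H2l"
  by code_simp
lemma I3: "list_all (\<lambda>h. half4 (qmul (qmul (1,1,0,0) h) (1,-1,0,0)) \<in> set H2l \<and>
   dbl4 (half4 (qmul (qmul (1,1,0,0) h) (1,-1,0,0))) = qmul (qmul (1,1,0,0) h) (1,-1,0,0)) H2l"
  by code_simp
lemma I4: "list_all (\<lambda>h. half4 (qmul (qmul (1,-1,0,0) h) (1,1,0,0)) \<in> set H2l \<and>
   qmul (qmul (1,1,0,0) (half4 (qmul (qmul (1,-1,0,0) h) (1,1,0,0)))) (1,-1,0,0) = dbl4 h) H2l"
  by code_simp
lemma I5: "list_all (\<lambda>(w,x,y,z). w*w+x*x+y*y+z*z = 4) H2l"
  by code_simp
lemma I6: "list_all (\<lambda>(w,x,y,z). w = 0 \<or> x = 0 \<or> y \<in> {-2,-1,1,2} \<or> z \<in> {-2,-1,1,2}) H2l"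
  by code_simp
lemma I7: "qmul (0,2,0,0) (1,1,1,1) = dbl4 (-1,1,-1,1)" "qmul (1,1,1,1) (0,2,0,0) = dbl4 (-1,1,1,-1)"
  "(2::int,0,0,0) \<in> set H2l" "(-2::int,0,0,0) \<in> set H2l" "(0::int,2,0,0) \<in> set H2l" "(1::int,1,1,1) \<in> set H2l"
  by code_simp+

definition emb :: "'a::field \<Rightarrow> int \<times> int \<times> int \<times> int \<Rightarrow> 'a \<times> 'a \<times> 'a \<times> 'a" where
  "emb s p = (case p of (w,x,y,z) \<Rightarrow> (of_int w * s, of_int x * s, of_int y * s, of_int z * s))"

lemma E1: "qmul (emb s h) (emb s' h') = emb (s*s') (qmul h h')"
  by (cases h; cases h') (simp add: emb_def qmul_def algebra_simps)

lemma E2: "emb s (dbl4 h) = emb (2*s) h"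
  by (cases h) (simp add: emb_def dbl4_def algebra_simps)

definition Qm :: "'a::field \<Rightarrow> 'a \<Rightarrow> 'a \<times> 'a \<times> 'a \<times> 'a \<Rightarrow> 'a mat2" where
  "Qm a b p = (case p of (w,x,y,z) \<Rightarrow> (w + y*a + z*b, x + y*b - z*a, -x + y*b - z*a, w - y*a - z*b))"

lemma QM: assumes ab: "a*a+b*b = (-1::'a::field)"
  shows "mat2_mult (Qm a b p) (Qm a b p') = Qm a b (qmul p p')"
proof -
  obtain w x y z where p: "p = (w,x,y,z)" by (cases p)
  obtain w' x' y' z' where p': "p' = (w',x',y',z')" by (cases p')
  have bb: "b*b = -1 - a*a" using ab by (simp add: algebra_simps)
  show ?thesis unfolding p p'
    by (simp add: Qm_def qmul_def mat2_mult_simp; intro conjI; insert ab; algebra)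
qed

lemma Qdet: assumes ab: "a*a+b*b = (-1::'a::field)"
  shows "Qm a b (w,x,y,z) \<in> carrier (SL2::'a mat2 monoid) \<longleftrightarrow> w*w+x*x+y*y+z*z = 1"
proof -
  have "(w + y*a + z*b)*(w - y*a - z*b) - (x + y*b - z*a)*(-x + y*b - z*a) = w*w+x*x+y*y+z*z"
    using ab by algebra
  then show ?thesis by (simp add: Qm_def SL2_carrier)
qed

lemma Qinv: "(al,be,ga,de) = Qm a b (w,x,y,z) \<Longrightarrow> (de,-be,-ga,al) = Qm a b (w,-x,-y,-z)"
  by (simp add: Qm_def algebra_simps)

lemma Qinj: assumes ab: "a*a+b*b = (-1::'a::field)" and two: "(2::'a) \<noteq> 0"
    and eq: "Qm a b p = Qm a b p'"
  shows "p = p'"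
proof -
  obtain w x y z where p: "p = (w,x,y,z)" by (cases p)
  obtain w' x' y' z' where p': "p' = (w',x',y',z')" by (cases p')
  have e: "w + y*a + z*b = w' + y'*a + z'*b" "x + y*b - z*a = x' + y'*b - z'*a"
     "-x + y*b - z*a = -x' + y'*b - z'*a" "w - y*a - z*b = w' - y'*a - z'*b"
    using eq by (simp_all add: p p' Qm_def)
  have "2*w = 2*w'" using e by algebra
  then have 1: "w = w'" using two by simp
  have "2*x = 2*x'" using e by algebra
  then have 2: "x = x'" using two by simp
  have "2*y = 2*y'" using e ab by algebra
  then have 3: "y = y'" using two by simp
  have "2*z = 2*z'" using e ab by algebra
  then have 4: "z = z'" using two by simp
  show ?thesis using 1 2 3 4 p p' by simp
qed

lemma neg2_Qm: "neg2 (Qm a b (w,x,y,z)) = Qm a b (-w,-x,-y,-z)"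
  by (simp add: Qm_def neg2_def algebra_simps)



lemma emb3: "fst (snd (snd (emb s (w,x,y,z)))) = of_int y * s" by (simp add: emb_def)
lemma emb1: "fst (emb s (w,x,y,z)) = of_int w * s" by (simp add: emb_def)

lemma quat_case:
  fixes a b r :: "'a::field"
  assumes two: "(2::'a) \<noteq> 0" and ab: "a*a+b*b = -1" and rr: "r*r = 2"
  shows "\<not> class_Yn (PSL2::'a mat2 set monoid)"
proof -
  define H where "H = set H2l"
  define e where "e = (\<lambda>h. Qm a b (emb (1/2::'a) h))"
  define X where "X = e ` H"
  have I1': "\<And>h h'. h \<in> H \<Longrightarrow> h' \<in> H \<Longrightarrow> half4 (qmul h h') \<in> H \<and> dbl4 (half4 (qmul h h')) = qmul h h'"
    using I1 unfolding H_def list_all_iff by blast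
  have I2': "\<And>h. h \<in> H \<Longrightarrow> conj4 h \<in> H" using I2 unfolding H_def list_all_iff by blast
  have I3': "\<And>h. h \<in> H \<Longrightarrow> half4 (qmul (qmul (1,1,0,0) h) (1,-1,0,0)) \<in> H \<and>
     dbl4 (half4 (qmul (qmul (1,1,0,0) h) (1,-1,0,0))) = qmul (qmul (1,1,0,0) h) (1,-1,0,0)"
    using I3 unfolding H_def list_all_iff by blast
  have I4': "\<And>h. h \<in> H \<Longrightarrow> half4 (qmul (qmul (1,-1,0,0) h) (1,1,0,0)) \<in> H \<and>
     qmul (qmul (1,1,0,0) (half4 (qmul (qmul (1,-1,0,0) h) (1,1,0,0)))) (1,-1,0,0) = dbl4 h"
    using I4 unfolding H_def list_all_iff by blast
  have I5': "\<And>w x y z. (w,x,y,z) \<in> H \<Longrightarrow> w*w+x*x+y*y+z*z = 4"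
    using I5 unfolding H_def list_all_iff by fastforce
  have I6': "\<And>w x y z. (w,x,y,z) \<in> H \<Longrightarrow> w = 0 \<or> x = 0 \<or> y \<in> {-2,-1,1,2} \<or> z \<in> {-2,-1,1,2}"
    using I6 unfolding H_def list_all_iff by fastforce
  have four: "(4::'a) \<noteq> 0"
  proof -
    have "(4::'a) = 2*2" by simp
    then show ?thesis using two by (simp only: mult_eq_0_iff) simp
  qed
  have sixteen: "(16::'a) \<noteq> 0"
  proof -
    have "(16::'a) = 4*4" by simp
    then show ?thesis using four by (simp only: mult_eq_0_iff) simp
  qed
  have s4: "(2::'a) * ((1/2) * (1/2)) = 1/2" using two four by (simp add: field_simps)
  have ee: "e (half4 k) = Qm a b (emb ((1/2)*(1/2)) k)" if "dbl4 (half4 k) = k" for k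
  proof -
    have "Qm a b (emb ((1/2)*(1/2)) k) = Qm a b (emb ((1/2)*(1/2)) (dbl4 (half4 k)))" using that by simp
    also have "\<dots> = e (half4 k)" unfolding E2 s4 e_def ..
    finally show ?thesis by simp
  qed
  have prod: "mat2_mult (e h) (e h') = e (half4 (qmul h h'))" if "h \<in> H" "h' \<in> H" for h h'
    unfolding e_def QM[OF ab] E1 using ee[of "qmul h h'"] I1'[OF that] by (simp add: e_def)
  have Xsub: "X \<subseteq> carrier SL2"
  proof
    fix m assume "m \<in> X"
    then obtain w x y z where h: "(w,x,y,z) \<in> H" "m = e (w,x,y,z)" unfolding X_def by auto
    have n: "w*w+x*x+y*y+z*z = 4" by (rule I5'[OF h(1)])
    have "(of_int w * (1/2::'a))*(of_int w * (1/2)) + (of_int x * (1/2))*(of_int x * (1/2))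
       + (of_int y * (1/2))*(of_int y * (1/2)) + (of_int z * (1/2))*(of_int z * (1/2))
       = of_int (w*w+x*x+y*y+z*z) * ((1/2)*(1/2))" by (simp add: algebra_simps)
    also have "\<dots> = 1" unfolding n using two four by (simp add: field_simps)
    finally show "m \<in> carrier SL2" unfolding h(2) e_def emb_def by (simp add: Qdet[OF ab])
  qed
  have one: "(1,0,0,1) \<in> X"
  proof -
    have "(1,0,0,1) = e (2,0,0,0)" unfolding e_def emb_def Qm_def using two by simp
    moreover have "(2,0,0,0) \<in> H" using I7 H_def by simp
    ultimately show ?thesis unfolding X_def by blast
  qed
  have mI: "(-1,0,0,-1) \<in> X"
  proof -
    have "(-1,0,0,-1) = e (-2,0,0,0)" unfolding e_def emb_def Qm_def using two by simp
    moreover have "(-2,0,0,0) \<in> H" using I7 H_def by simp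
    ultimately show ?thesis unfolding X_def by blast
  qed
  have mult: "mat2_mult x y \<in> X" if "x \<in> X" "y \<in> X" for x y
    using that prod I1' unfolding X_def by auto
  have inv: "(dd,-bb,-cc,aa) \<in> X" if "(aa,bb,cc,dd) \<in> X" for aa bb cc dd
  proof -
    from that obtain w x y z where h: "(w,x,y,z) \<in> H" "(aa,bb,cc,dd) = e (w,x,y,z)" unfolding X_def by auto
    have "(dd,-bb,-cc,aa) = e (conj4 (w,x,y,z))"
      using Qinv[OF h(2)[unfolded e_def emb_def prod.case]] by (simp add: e_def emb_def conj4_def)
    then show ?thesis using I2'[OF h(1)] unfolding X_def by blast
  qed
  have sX: "subgroup X SL2" by (rule SL2_subgroupI[OF Xsub one mult inv])
  define u0 where "u0 = e (0,2,0,0)"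
  define v0 where "v0 = e (1,1,1,1)"
  have u0: "u0 \<in> X" unfolding u0_def X_def H_def using I7 by blast
  have v0: "v0 \<in> X" unfolding v0_def X_def H_def using I7 by blast
  have uv: "mat2_mult u0 v0 = Qm a b (emb ((1/2)*(1/2)) (dbl4 (-1,1,-1,1)))"
    unfolding u0_def v0_def e_def QM[OF ab] E1 I7(1) ..
  have vu: "mat2_mult v0 u0 = Qm a b (emb ((1/2)*(1/2)) (dbl4 (-1,1,1,-1)))"
    unfolding u0_def v0_def e_def QM[OF ab] E1 I7(2) ..
  have hnz: "(1/2::'a) \<noteq> 0" using two by simp
  have nc1: "mat2_mult u0 v0 \<noteq> mat2_mult v0 u0"
  proof
    assume "mat2_mult u0 v0 = mat2_mult v0 u0"
    then have "emb ((1/2::'a)*(1/2)) (dbl4 (-1,1,-1,1)) = emb ((1/2)*(1/2)) (dbl4 (-1,1,1,-1))"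
      unfolding uv vu by (rule Qinj[OF ab two])
    then have "emb ((1/2::'a)*(1/2)) (-2,2,-2,2) = emb ((1/2)*(1/2)) (-2,2,2,-2)"
      by (simp add: dbl4_def)
    then have "fst (snd (snd (emb ((1/2::'a)*(1/2)) (-2,2,-2,2)))) = fst (snd (snd (emb ((1/2)*(1/2)) (-2,2,2,-2))))"
      by (rule arg_cong)
    then have "of_int (-2) * ((1/2::'a)*(1/2)) = of_int 2 * ((1/2)*(1/2))" by (simp only: emb3)
    then have "(1::'a) = 0" using two four sixteen by (simp add: field_simps)
    then show False by simp
  qed
  have nc2: "mat2_mult u0 v0 \<noteq> neg2 (mat2_mult v0 u0)"
  proof
    assume "mat2_mult u0 v0 = neg2 (mat2_mult v0 u0)"
    then have "Qm a b (emb ((1/2::'a)*(1/2)) (dbl4 (-1,1,-1,1))) = Qm a b (emb ((1/2)*(1/2)) (dbl4 (1,-1,-1,1)))"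
      unfolding uv vu E2 s4 by (simp add: emb_def neg2_Qm)
    then have "emb ((1/2::'a)*(1/2)) (dbl4 (-1,1,-1,1)) = emb ((1/2)*(1/2)) (dbl4 (1,-1,-1,1))"
      by (rule Qinj[OF ab two])
    then have "emb ((1/2::'a)*(1/2)) (-2,2,-2,2) = emb ((1/2)*(1/2)) (2,-2,-2,2)"
      by (simp add: dbl4_def)
    then have "fst (emb ((1/2::'a)*(1/2)) (-2,2,-2,2)) = fst (emb ((1/2)*(1/2)) (2,-2,-2,2))"
      by (rule arg_cong)
    then have "of_int (-2) * ((1/2::'a)*(1/2)) = of_int 2 * ((1/2)*(1/2))" by (simp only: emb1)
    then have "(1::'a) = 0" using two four sixteen by (simp add: field_simps)
    then show False by simp
  qed
  have rnz: "r \<noteq> 0" using rr two by auto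
  define g where "g = Qm a b (emb (1/r) (1,1,0,0))"
  have gc: "g \<in> carrier SL2"
  proof -
    have "(1/r)*(1/r) + (1/r)*(1/r) = (1::'a)" using rr rnz two by (simp add: field_simps)
    then show ?thesis unfolding g_def emb_def using two by (simp add: Qdet[OF ab])
  qed
  have ig: "inv\<^bsub>SL2\<^esub> g = Qm a b (emb (1/r) (1,-1,0,0))"
  proof -
    have "(1/r)*(1/r) - (1/r)*(-(1/r)) = (1::'a)" using rr rnz two by (simp add: field_simps)
    then have "inv\<^bsub>SL2\<^esub> (1/r, 1/r, -(1/r), 1/r) = (1/r, -(1/r), -(-(1/r)), 1/r)"
      by (rule SL2_inv)
    moreover have "g = (1/r, 1/r, -(1/r), 1/r)" unfolding g_def emb_def Qm_def by simp
    moreover have "Qm a b (emb (1/r) (1,-1,0,0)) = (1/r, -(1/r), -(-(1/r)), 1/r)"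
      unfolding emb_def Qm_def by simp
    ultimately show ?thesis by simp
  qed
  have r4: "r*(r*2) = (4::'a)"
  proof -
    have "r*(r*2) = (r*r)*2" by (simp add: mult.assoc)
    then show ?thesis using rr by simp
  qed
  have rc: "1/r * (1/2) * (1/r) = (1/2::'a)*(1/2)" using r4 rnz two four by (simp add: field_simps)
  have cjf: "g \<otimes>\<^bsub>SL2\<^esub> e h \<otimes>\<^bsub>SL2\<^esub> inv\<^bsub>SL2\<^esub> g
      = Qm a b (emb ((1/2)*(1/2)) (qmul (qmul (1,1,0,0) h) (1,-1,0,0)))" for h
  proof -
    have "g \<otimes>\<^bsub>SL2\<^esub> e h \<otimes>\<^bsub>SL2\<^esub> inv\<^bsub>SL2\<^esub> g = mat2_mult (mat2_mult g (e h)) (Qm a b (emb (1/r) (1,-1,0,0)))"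
      unfolding ig by (simp add: SL2_mult)
    also have "\<dots> = Qm a b (emb ((1/2)*(1/2)) (qmul (qmul (1,1,0,0) h) (1,-1,0,0)))"
      unfolding g_def e_def QM[OF ab] E1 rc ..
    finally show ?thesis .
  qed
  have cj: "(\<lambda>x. g \<otimes>\<^bsub>SL2\<^esub> x \<otimes>\<^bsub>SL2\<^esub> inv\<^bsub>SL2\<^esub> g) ` X = X"
  proof (intro equalityI subsetI)
    fix y assume "y \<in> (\<lambda>x. g \<otimes>\<^bsub>SL2\<^esub> x \<otimes>\<^bsub>SL2\<^esub> inv\<^bsub>SL2\<^esub> g) ` X"
    then obtain h where h: "h \<in> H" "y = g \<otimes>\<^bsub>SL2\<^esub> e h \<otimes>\<^bsub>SL2\<^esub> inv\<^bsub>SL2\<^esub> g"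
      unfolding X_def by auto
    have "y = e (half4 (qmul (qmul (1,1,0,0) h) (1,-1,0,0)))"
      unfolding h(2) cjf using ee I3'[OF h(1)] by simp
    then show "y \<in> X" using I3'[OF h(1)] unfolding X_def by blast
  next
    fix y assume "y \<in> X"
    then obtain h where h: "h \<in> H" "y = e h" unfolding X_def by auto
    define k where "k = half4 (qmul (qmul (1,-1,0,0) h) (1,1,0,0))"
    have k: "k \<in> H" "qmul (qmul (1,1,0,0) k) (1,-1,0,0) = dbl4 h" using I4'[OF h(1)] k_def by auto
    have "g \<otimes>\<^bsub>SL2\<^esub> e k \<otimes>\<^bsub>SL2\<^esub> inv\<^bsub>SL2\<^esub> g = y"
      unfolding cjf k(2) E2 s4 h(2) by (simp add: e_def)
    then show "y \<in> (\<lambda>x. g \<otimes>\<^bsub>SL2\<^esub> x \<otimes>\<^bsub>SL2\<^esub> inv\<^bsub>SL2\<^esub> g) ` X"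
      using k(1) unfolding X_def by (auto intro!: image_eqI)
  qed
  have gX: "g \<notin> X"
  proof
    assume "g \<in> X"
    then obtain w x y z where h: "(w,x,y,z) \<in> H" "g = e (w,x,y,z)" unfolding X_def by auto
    then have "emb (1/r) (1,1,0,0) = emb (1/2) (w,x,y,z)"
      unfolding g_def e_def using Qinj[OF ab two] by blast
    then have "(of_int 1 * (1/r), of_int 1 * (1/r), of_int 0 * (1/r), of_int 0 * (1/r)) =
        (of_int w * (1/2::'a), of_int x * (1/2), of_int y * (1/2), of_int z * (1/2))"
      by (simp only: emb_def prod.case)
    note tt = this
    have c: "of_int 1 * (1/r) = of_int w * (1/2::'a)" "of_int 1 * (1/r) = of_int x * (1/2::'a)"
        "of_int 0 * (1/r) = of_int y * (1/2::'a)" "of_int 0 * (1/r) = of_int z * (1/2::'a)"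
      using tt[unfolded prod.inject] by blast+
    have ofz: "(of_int k::'a) \<noteq> 0" if "k \<in> {-2,-1,1,2}" for k
      using that two by auto
    from I6'[OF h(1)] show False
    proof (elim disjE)
      assume "w = 0" then show False using c(1) rnz by simp
    next
      assume "x = 0" then show False using c(2) rnz by simp
    next
      assume "y \<in> {-2,-1,1,2}" then show False using c(3) ofz hnz by simp
    next
      assume "z \<in> {-2,-1,1,2}" then show False using c(4) ofz hnz by simp
    qed
  qed
  show ?thesis by (rule not_Yn_SL2[OF sX mI u0 v0 nc1 nc2 gc gX cj])
qed



lemma fermat_ff:
  assumes "(x::'a::{field,finite}) \<noteq> 0"
  shows "x ^ (card (UNIV::'a set) - 1) = 1"
proof -
  define U where "U = (UNIV::'a set) - {0}"
  have bij: "bij_betw (\<lambda>y. x*y) U U"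
    by (rule bij_betwI[of _ _ _ "\<lambda>y. y / x"]) (use assms in \<open>auto simp: U_def\<close>)
  have "(\<Prod>y\<in>U. x*y) = (\<Prod>y\<in>U. y)"
    using prod.reindex_bij_betw[OF bij, of "\<lambda>y. y"] by simp
  moreover have "(\<Prod>y\<in>U. x*y) = x ^ card U * (\<Prod>y\<in>U. y)"
    by (simp add: prod.distrib)
  moreover have "(\<Prod>y\<in>U. y) \<noteq> 0" by (simp add: U_def)
  ultimately have "x ^ card U = 1" by simp
  moreover have "card U = card (UNIV::'a set) - 1" unfolding U_def
    by (simp add: card_Diff_singleton)
  ultimately show ?thesis by simp
qed

lemma sq1: "(z::'a::field)*z = 1 \<Longrightarrow> z = 1 \<or> z = -1"
proof -
  assume "z*z = 1"
  then have "(z - 1)*(z + 1) = 0" by algebra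
  then show ?thesis by (auto simp: eq_neg_iff_add_eq_0)
qed

lemma sqrt_m1_9:
  assumes "card (UNIV::'a::{field,finite} set) = 9"
  shows "\<exists>i::'a. i*i = -1"
proof (rule ccontr)
  assume na: "\<not> ?thesis"
  have "(UNIV::'a set) \<subseteq> {0,1,-1}"
  proof
    fix x :: 'a
    show "x \<in> {0,1,-1}"
    proof (cases "x = 0")
      case True then show ?thesis by simp
    next
      case False
      have "x ^ 8 = 1" using fermat_ff[OF False] assms by simp
      then have "(x*x*x*x)*(x*x*x*x) = 1" by (simp add: power_def numeral_eq_Suc algebra_simps)
      then have "x*x*x*x = 1 \<or> x*x*x*x = -1" by (rule sq1)
      moreover have "x*x*x*x \<noteq> -1" using na by (metis mult.assoc)
      ultimately have "(x*x)*(x*x) = 1" by (simp add: mult.assoc)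
      then have "x*x = 1 \<or> x*x = -1" by (rule sq1)
      then have "x*x = 1" using na by blast
      then have "x = 1 \<or> x = -1" by (rule sq1)
      then show ?thesis by simp
    qed
  qed
  then have "card (UNIV::'a set) \<le> card {0,1,-1::'a}" by (rule card_mono[rotated]) simp
  also have "\<dots> \<le> 3" by (simp add: card_insert_if)
  finally show False using assms by simp
qed

theorem lemma2p16:
  fixes q :: nat
  assumes "card (UNIV :: 'a set) = q"
    and "\<exists>p k. prime p \<and> k > 0 \<and> q = p ^ k"
    and "odd q" and "q \<noteq> 3" and "q \<noteq> 5"
  shows "\<not> class_Yn (PSL2 :: ('a::{field,finite} mat2 set) monoid)"
proof -
  obtain p k where pk: "prime p" "k > 0" "q = p ^ k" using assms(2) by blast
  have "p \<ge> 2" using pk(1) prime_ge_2_nat by blast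
  then have "p ^ k \<ge> p" using pk(2) by (simp add: self_le_power)
  then have q2: "q \<ge> 2" using \<open>p \<ge> 2\<close> pk(3) by simp
  have oddU: "odd (card (UNIV::'a set))" using assms(1,3) by simp
  have two: "(2::'a) \<noteq> 0" by (rule two_nz[OF oddU])
  obtain a b :: 'a where ab: "a*a+b*b = -1" using sum_two_squares[OF oddU] by blast
  have "q mod 2 = 1" using assms(3) by presburger
  then have "q = 7 \<or> q = 9 \<or> q \<ge> 10" using q2 assms(4,5) by presburger
  then consider "q = 7" | "q = 9" | "q \<ge> 10" by blast
  then show ?thesis
  proof cases
    case 1
    have "(of_nat 7::'a) = 0" using card_char[where 'a='a] assms(1) 1 by simp
    then have z7: "(7::'a) = 0" by simp
    have "(3::'a)*3 = 2 + 7" by simp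
    then have "(3::'a)*3 = 2" using z7 by simp
    then show ?thesis by (rule quat_case[OF two ab])
  next
    case 2
    have "(of_nat 9::'a) = 0" using card_char[where 'a='a] assms(1) 2 by simp
    then have z9: "(9::'a) = 0" by simp
    have e9: "(3::'a)*3 = 9" by simp
    have "(3::'a)*3 = 0" by (simp only: e9 z9)
    then have z3: "(3::'a) = 0" by (metis mult_eq_0_iff)
    obtain i :: 'a where i: "i*i = -1" using sqrt_m1_9 assms(1) 2 by blast
    have "(2::'a) = 3 - 1" by simp
    then have "(2::'a) = -1" using z3 by simp
    then have "i*i = 2" using i by simp
    then show ?thesis by (rule quat_case[OF two ab])
  next
    case 3
    then show ?thesis using big_case[OF oddU] assms(1) by simp
  qed
qed


end
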